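(* Let $Z\in\{0,1\}$, $S(1),S(0)\in\{0,1\}$ and a covariate vector $\mathbf{X}$ be random variables with $Z\perp\!\!\!\perp\{S(1),S(0),\mathbf{X}\}$ and observed $S=S(Z)$. Assume Monotonicity, $S(1)\ge S(0)$ almost surely. Then $\mathbf{X}\perp\!\!\!\perp U\mid\{Z=1,S=1,e_{1,u}(\mathbf{X})\}$ for $u=s\bar{s}$ and $u=ss$, and $\mathbf{X}\perp\!\!\!\perp U\mid\{Z=0,S=0,e_{0,u}(\mathbf{X})\}$ for $u=s\bar{s}$ and $u=\bar{s}\bar{s}$.
   Context: The principal stratum is $U=(S(1),S(0))$, whose values $(1,1),(1,0),(0,1),(0,0)$ are labelled $ss, s\bar{s}, \bar{s}s, \bar{s}\bar{s}$. Principal scores: $e_u(\mathbf{X}) = \Pr(U=u\mid \mathbf{X})$. Define $e_{1,s\bar{s}}(\mathbf{X}) = e_{s\bar{s}}(\mathbf{X})/\{e_{s\bar{s}}(\mathbf{X})+e_{ss}(\mathbf{X})\}$, $e_{1,ss}(\mathbf{X}) = e_{ss}(\mathbf{X})/\{e_{s\bar{s}}(\mathbf{X})+e_{ss}(\mathbf{X})\}$, $e_{0,s\bar{s}}(\mathbf{X}) = e_{s\bar{s}}(\mathbf{X})/\{e_{s\bar{s}}(\mathbf{X})+e_{\bar{s}\bar{s}}(\mathbf{X})\}$, $e_{0,\bar{s}\bar{s}}(\mathbf{X}) = e_{\bar{s}\bar{s}}(\mathbf{X})/\{e_{s\bar{s}}(\mathbf{X})+e_{\bar{s}\bar{s}}(\mathbf{X})\}$.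 Conditioning events and denominators are assumed positive. *)

theory Defs
  imports "HOL-Probability.Probability"
begin

text \<open>Principal strata: U = (S(1), S(0)) as a pair of booleans (True = 1).\<close>
abbreviation ss :: "bool \<times> bool" where "ss \<equiv> (True, True)"
abbreviation ssbar :: "bool \<times> bool" where "ssbar \<equiv> (True, False)"
abbreviation sbars :: "bool \<times> bool" where "sbars \<equiv> (False, True)"
abbreviation sbarsbar :: "bool \<times> bool" where "sbarsbar \<equiv> (False, False)"

definition e1 :: "(bool \<times> bool \<Rightarrow> 'x \<Rightarrow> real) \<Rightarrow> bool \<times> bool \<Rightarrow> 'x \<Rightarrow> real" where
  "e1 e u x = e u x / (e ssbar x + e ss x)"

definition e0 :: "(bool \<times> bool \<Rightarrow> 'x \<Rightarrow> real) \<Rightarrow> bool \<times> bool \<Rightarrow> 'x \<Rightarrow> real" where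
  "e0 e u x = e u x / (e ssbar x + e sbarsbar x)"

definition cond_indep ::
  "'a measure \<Rightarrow> 'a measure \<Rightarrow> ('a \<Rightarrow> 'b) \<Rightarrow> 'b measure \<Rightarrow> ('a \<Rightarrow> 'c) \<Rightarrow> 'c measure \<Rightarrow> bool" where
  "cond_indep P G X MX Y MY \<longleftrightarrow>
     (\<forall>A\<in>sets MX. \<forall>B\<in>sets MY. AE \<omega> in P.
        real_cond_exp P G (indicator ((X -` A \<inter> space P) \<inter> (Y -` B \<inter> space P))) \<omega> =
        real_cond_exp P G (indicator (X -` A \<inter> space P)) \<omega> *
        real_cond_exp P G (indicator (Y -` B \<inter> space P)) \<omega>)"

end

theory Submission
  imports Defs
begin


lemma unif_integral:
  assumes "finite_measure M" "A \<in> sets M" "measure M A > 0" "f \<in> borel_measurable M"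
  shows "integral\<^sup>L (uniform_measure M A) f = integral\<^sup>L M (\<lambda>x. indicator A x * f x) / measure M A"
proof -
  interpret finite_measure M by fact
  have em: "emeasure M A = ennreal (measure M A)" by (simp add: emeasure_eq_measure)
  have "uniform_measure M A = density M (\<lambda>x. ennreal (indicator A x / measure M A))"
    unfolding uniform_measure_def
  proof (rule density_cong)
    show "(\<lambda>x. indicator A x / emeasure M A) \<in> borel_measurable M" using assms(2) by measurable
    show "(\<lambda>x. ennreal (indicator A x / measure M A)) \<in> borel_measurable M" using assms(2) by measurable
    show "AE x in M. indicator A x / emeasure M A = ennreal (indicator A x / measure M A)"
      using assms(3) divide_ennreal[of 1 "measure M A"] by (auto simp: em indicator_def)
  qed
  then have "integral\<^sup>L (uniform_measure M A) f = integral\<^sup>L M (\<lambda>x. (indicator A x / measure M A) *\<^sub>R f x)"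
    using assms by (simp add: integral_density)
  also have "\<dots> = integral\<^sup>L M (\<lambda>x. indicator A x * f x) / measure M A"
    by (simp add: field_simps)
  finally show ?thesis .
qed

lemma core:
  fixes P :: "'a measure" and X :: "'a \<Rightarrow> 'x" and U :: "'a \<Rightarrow> 'u"
    and MX :: "'x measure" and \<phi> :: "'x \<Rightarrow> real" and t :: "'a \<Rightarrow> real"
  assumes P: "prob_space P"
    and G: "G = vimage_algebra (space P) (\<lambda>\<omega>. \<phi> (X \<omega>)) borel"
    and Xm[measurable]: "X \<in> measurable P MX" and phim[measurable]: "\<phi> \<in> borel_measurable MX"
    and Um[measurable]: "U \<in> measurable P (count_space UNIV)"
    and AEU: "AE \<omega> in P. U \<omega> = u1 \<or> U \<omega> = u2"
    and tm: "t \<in> borel_measurable G" and tb: "\<And>\<omega>. 0 \<le> t \<omega> \<and> t \<omega> \<le> 1"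
    and K: "\<And>B. B \<in> sets MX \<Longrightarrow>
       (\<integral>\<omega>. indicator (X -` B \<inter> space P) \<omega> * indicator {\<omega>\<in>space P. U \<omega> = u1} \<omega> \<partial>P)
     = (\<integral>\<omega>. indicator (X -` B \<inter> space P) \<omega> * t \<omega> \<partial>P)"
  shows "cond_indep P G X MX U (count_space UNIV)"
proof -
  interpret prob_space P by fact
  have subalg: "subalgebra P G"
  proof -
    have "(\<lambda>\<omega>. \<phi> (X \<omega>)) \<in> borel_measurable P" by measurable
    from sets_image_in_sets[OF refl this] show ?thesis unfolding subalgebra_def G by auto
  qed
  interpret fs: finite_measure_subalgebra P G
    by unfold_locales (fact subalg)
  have tmP[measurable]: "t \<in> borel_measurable P" using measurable_from_subalg[OF subalg tm] .
  have Gsets: "\<exists>B\<in>sets MX. D = X -` B \<inter> space P" if "D \<in> sets G" for D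
  proof -
    have "sets G = {(\<lambda>\<omega>. \<phi> (X \<omega>)) -` A \<inter> space P | A. A \<in> sets borel}"
      unfolding G by (rule sets_vimage_algebra2) auto
    with that obtain A where A: "A \<in> sets borel" "D = (\<lambda>\<omega>. \<phi> (X \<omega>)) -` A \<inter> space P" by auto
    show ?thesis
      by (rule bexI[of _ "\<phi> -` A \<inter> space MX"]) (use A measurable_space[OF Xm] in auto)
  qed
  have intb: "integrable P f" if "f \<in> borel_measurable P" "\<And>\<omega>. \<bar>f \<omega>\<bar> \<le> c" for f :: "'a \<Rightarrow> real" and c
    using that by (intro integrable_const_bound[where B=c]) auto
  show ?thesis
    unfolding cond_indep_def
  proof (intro ballI)
    fix B C assume B[measurable]: "B \<in> sets MX" and C: "C \<in> sets (count_space (UNIV::'u set))"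
    define IB :: "'a \<Rightarrow> real" where "IB = indicator (X -` B \<inter> space P)"
    define IC :: "'a \<Rightarrow> real" where "IC = indicator (U -` C \<inter> space P)"
    define V :: "'a \<Rightarrow> real" where "V = indicator {\<omega>\<in>space P. U \<omega> = u1}"
    define a :: real where "a = (if u2 \<in> C then 1 else 0)"
    define b :: real where "b = (if u1 \<in> C then 1 else 0) - a"
    have IBm[measurable]: "IB \<in> borel_measurable P" unfolding IB_def by measurable
    have ICm[measurable]: "IC \<in> borel_measurable P" unfolding IC_def
      by (rule borel_measurable_indicator) (use measurable_sets[OF Um] in simp)
    have Vm[measurable]: "V \<in> borel_measurable P" unfolding V_def by measurable
    have AEC: "AE \<omega> in P. IC \<omega> = a + b * V \<omega>"
      using AEU AE_space by eventually_elim (auto simp: IC_def V_def a_def b_def indicator_def)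
    have K2: "(\<integral>\<omega>. indicator (X -` B' \<inter> space P) \<omega> * IC \<omega> \<partial>P)
        = (\<integral>\<omega>. indicator (X -` B' \<inter> space P) \<omega> * (a + b * t \<omega>) \<partial>P)"
      if B'[measurable]: "B' \<in> sets MX" for B'
    proof -
      let ?I = "indicator (X -` B' \<inter> space P) :: 'a \<Rightarrow> real"
      have i1: "integrable P ?I"
        by (rule integrable_const_bound[where B=1]) auto
      have i2: "integrable P (\<lambda>\<omega>. ?I \<omega> * V \<omega>)"
        by (rule integrable_const_bound[where B=1]) (auto simp: V_def indicator_def)
      have i3: "integrable P (\<lambda>\<omega>. ?I \<omega> * t \<omega>)"
        by (rule integrable_const_bound[where B=1]) (auto simp: indicator_def tb abs_le_iff)
      have "(\<integral>\<omega>. ?I \<omega> * IC \<omega> \<partial>P) = (\<integral>\<omega>. a * ?I \<omega> + b * (?I \<omega> * V \<omega>) \<partial>P)"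
        by (rule integral_cong_AE) (use AEC in \<open>auto simp: algebra_simps\<close>)
      also have "\<dots> = a * (\<integral>\<omega>. ?I \<omega> \<partial>P) + b * (\<integral>\<omega>. ?I \<omega> * V \<omega> \<partial>P)"
        using i1 i2 by simp
      also have "(\<integral>\<omega>. ?I \<omega> * V \<omega> \<partial>P) = (\<integral>\<omega>. ?I \<omega> * t \<omega> \<partial>P)"
        unfolding V_def by (rule K[OF B'])
      also have "a * (\<integral>\<omega>. ?I \<omega> \<partial>P) + b * (\<integral>\<omega>. ?I \<omega> * t \<omega> \<partial>P) = (\<integral>\<omega>. a * ?I \<omega> + b * (?I \<omega> * t \<omega>) \<partial>P)"
        using i1 i3 by simp
      also have "\<dots> = (\<integral>\<omega>. ?I \<omega> * (a + b * t \<omega>) \<partial>P)"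
        by (simp add: algebra_simps)
      finally show ?thesis .
    qed
    have abt[measurable]: "(\<lambda>\<omega>. a + b * t \<omega>) \<in> borel_measurable G" using tm by measurable
    have abtP[measurable]: "(\<lambda>\<omega>. a + b * t \<omega>) \<in> borel_measurable P" by measurable
    have abtb: "\<bar>a + b * t \<omega>\<bar> \<le> 2" for \<omega>
      using tb[of \<omega>] by (auto simp: a_def b_def)
    have iabt: "integrable P (\<lambda>\<omega>. a + b * t \<omega>)"
      by (rule integrable_const_bound[where B=2]) (use abtb in auto)
    have iIB: "integrable P IB"
      by (rule integrable_const_bound[where B=1]) (auto simp: IB_def)
    have iIC: "integrable P IC"
      using ICm by (intro integrable_const_bound[where B=1]) (auto simp: IC_def)
    have iIBC: "integrable P (\<lambda>\<omega>. IB \<omega> * IC \<omega>)"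
    proof (rule integrable_const_bound[where B=1])
      show "(\<lambda>\<omega>. IB \<omega> * IC \<omega>) \<in> borel_measurable P" by measurable
    qed (auto simp: IC_def IB_def indicator_def)
    have E1: "AE \<omega> in P. real_cond_exp P G IC \<omega> = a + b * t \<omega>"
    proof (rule fs.real_cond_exp_charact)
      fix D assume "D \<in> sets G"
      then obtain B' where B'[measurable]: "B' \<in> sets MX" "D = X -` B' \<inter> space P" using Gsets by blast
      show "(\<integral>\<omega>\<in>D. IC \<omega> \<partial>P) = (\<integral>\<omega>\<in>D. a + b * t \<omega> \<partial>P)"
        unfolding set_lebesgue_integral_def using K2[OF B'(1)] B'(2) by simp
    qed (use iIC iabt abt in auto)
    have E2: "AE \<omega> in P. real_cond_exp P G (\<lambda>\<omega>. IB \<omega> * IC \<omega>) \<omega> = real_cond_exp P G IB \<omega> * (a + b * t \<omega>)"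
    proof (rule fs.real_cond_exp_charact)
      fix D assume DG: "D \<in> sets G"
      then obtain B' where B'[measurable]: "B' \<in> sets MX" "D = X -` B' \<inter> space P" using Gsets by blast
      have DGm[measurable]: "(\<lambda>\<omega>. indicator D \<omega> * (a + b * t \<omega>)) \<in> borel_measurable G"
        using DG tm by measurable
      have "(\<integral>\<omega>\<in>D. IB \<omega> * IC \<omega> \<partial>P) = (\<integral>\<omega>. indicator (X -` (B' \<inter> B) \<inter> space P) \<omega> * IC \<omega> \<partial>P)"
        unfolding set_lebesgue_integral_def B'(2) IB_def
        by (intro Bochner_Integration.integral_cong) (auto simp: indicator_def)
      also have "\<dots> = (\<integral>\<omega>. indicator (X -` (B' \<inter> B) \<inter> space P) \<omega> * (a + b * t \<omega>) \<partial>P)"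
        by (rule K2) simp
      also have "\<dots> = (\<integral>\<omega>. (indicator D \<omega> * (a + b * t \<omega>)) * IB \<omega> \<partial>P)"
        unfolding B'(2) IB_def
        by (intro Bochner_Integration.integral_cong) (auto simp: indicator_def)
      also have "\<dots> = (\<integral>\<omega>. (indicator D \<omega> * (a + b * t \<omega>)) * real_cond_exp P G IB \<omega> \<partial>P)"
      proof (rule fs.real_cond_exp_intg(2)[symmetric])
        show "integrable P (\<lambda>\<omega>. indicator D \<omega> * (a + b * t \<omega>) * IB \<omega>)"
        proof (rule integrable_const_bound[where B=2])
          have [measurable]: "(\<lambda>\<omega>. indicator D \<omega> * (a + b * t \<omega>)) \<in> borel_measurable P"
            using measurable_from_subalg[OF subalg DGm] .
          show "(\<lambda>\<omega>. indicator D \<omega> * (a + b * t \<omega>) * IB \<omega>) \<in> borel_measurable P" by measurable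
        qed (use abtb in \<open>auto simp: IB_def indicator_def\<close>)
      qed (use DGm IBm in auto)
      also have "\<dots> = (\<integral>\<omega>\<in>D. real_cond_exp P G IB \<omega> * (a + b * t \<omega>) \<partial>P)"
        unfolding set_lebesgue_integral_def by (simp add: algebra_simps)
      finally show "(\<integral>\<omega>\<in>D. IB \<omega> * IC \<omega> \<partial>P) = (\<integral>\<omega>\<in>D. real_cond_exp P G IB \<omega> * (a + b * t \<omega>) \<partial>P)" .
    next
      have "integrable P (\<lambda>\<omega>. (a + b * t \<omega>) * real_cond_exp P G IB \<omega>)"
        by (rule fs.real_cond_exp_intg(1)) (use iabt iIB in \<open>auto intro!: integrable_const_bound[where B=2] simp: IB_def indicator_def abtb\<close>)
      then show "integrable P (\<lambda>\<omega>. real_cond_exp P G IB \<omega> * (a + b * t \<omega>))"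
        by (simp add: mult.commute)
    qed (use iIBC in auto)
    have eqI: "indicator ((X -` B \<inter> space P) \<inter> (U -` C \<inter> space P)) = (\<lambda>\<omega>. IB \<omega> * IC \<omega>)"
      unfolding IB_def IC_def by (auto simp: indicator_def fun_eq_iff)
    show "AE \<omega> in P. real_cond_exp P G (indicator ((X -` B \<inter> space P) \<inter> (U -` C \<inter> space P))) \<omega> =
        real_cond_exp P G (indicator (X -` B \<inter> space P)) \<omega> * real_cond_exp P G (indicator (U -` C \<inter> space P)) \<omega>"
      unfolding eqI IB_def[symmetric] IC_def[symmetric]
      using E1 E2 by eventually_elim simp
  qed
qed

lemma indep_int:
  fixes zf :: "'z \<Rightarrow> real" and h :: "'w \<Rightarrow> real"
  assumes P: "prob_space M"
    and Zm: "Z \<in> measurable M (count_space UNIV)" and Wm: "W \<in> measurable M N"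
    and ind: "prob_space.indep_set M (sets (vimage_algebra (space M) Z (count_space UNIV)))
                (sets (vimage_algebra (space M) W N))"
    and hm: "h \<in> borel_measurable N"
    and zb: "\<And>z. \<bar>zf z\<bar> \<le> c1" and hb: "\<And>w. \<bar>h w\<bar> \<le> c2"
  shows "(\<integral>\<omega>. zf (Z \<omega>) * h (W \<omega>) \<partial>M) = (\<integral>\<omega>. zf (Z \<omega>) \<partial>M) * (\<integral>\<omega>. h (W \<omega>) \<partial>M)"
proof -
  interpret prob_space M by fact
  let ?VZ = "vimage_algebra (space M) Z (count_space UNIV)"
  let ?VW = "vimage_algebra (space M) W N"
  have s1: "sigma_sets (space M) {(zf \<circ> Z) -` A \<inter> space M | A. A \<in> sets borel} \<subseteq> sets ?VZ"
  proof -
    have "{(zf \<circ> Z) -` A \<inter> space M | A. A \<in> sets borel} \<subseteq> sets ?VZ"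
    proof
      fix x assume "x \<in> {(zf \<circ> Z) -` A \<inter> space M | A. A \<in> sets borel}"
      then obtain A where "x = (zf \<circ> Z) -` A \<inter> space M" by blast
      then have "x = Z -` (zf -` A) \<inter> space M" by (simp add: vimage_comp)
      then show "x \<in> sets ?VZ" by (simp add: in_vimage_algebra)
    qed
    from sets.sigma_sets_subset[OF this] show ?thesis by simp
  qed
  have s2: "sigma_sets (space M) {(h \<circ> W) -` A \<inter> space M | A. A \<in> sets borel} \<subseteq> sets ?VW"
  proof -
    have "{(h \<circ> W) -` A \<inter> space M | A. A \<in> sets borel} \<subseteq> sets ?VW"
    proof
      fix x assume "x \<in> {(h \<circ> W) -` A \<inter> space M | A. A \<in> sets borel}"
      then obtain A where A0: "A \<in> sets borel" "x = (h \<circ> W) -` A \<inter> space M" by blast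
      have A: "A \<in> sets borel" "x = W -` (h -` A \<inter> space N) \<inter> space M"
        using A0 measurable_space[OF Wm] by auto
      have hA: "h -` A \<inter> space N \<in> sets N" using hm A(1) by measurable
      show "x \<in> sets ?VW" unfolding A(2) by (rule in_vimage_algebra[OF hA])
    qed
    from sets.sigma_sets_subset[OF this] show ?thesis by simp
  qed
  have "indep_var borel (zf \<circ> Z) borel (h \<circ> W)"
    unfolding indep_var_eq
  proof (intro conjI)
    show "random_variable borel (zf \<circ> Z)" using Zm by auto
    show "random_variable borel (h \<circ> W)" using Wm hm by auto
    show "indep_set (sigma_sets (space M) {(zf \<circ> Z) -` A \<inter> space M | A. A \<in> sets borel})
      (sigma_sets (space M) {(h \<circ> W) -` A \<inter> space M | A. A \<in> sets borel})"
      using ind s1 s2 unfolding indep_sets2_eq by blast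
  qed
  moreover have "integrable M (zf \<circ> Z)"
    by (rule integrable_const_bound[where B=c1]) (use Zm zb in auto)
  moreover have "integrable M (h \<circ> W)"
    by (rule integrable_const_bound[where B=c2]) (use Wm hm hb in auto)
  ultimately show ?thesis using indep_var_lebesgue_integral by (simp add: comp_def)
qed

lemma ceX:
  fixes g :: "'x \<Rightarrow> real"
  assumes P: "prob_space M" and Xm: "X \<in> measurable M MX" and gm: "g \<in> borel_measurable MX"
    and gb: "\<And>x. \<bar>g x\<bar> \<le> c"
    and Vm: "V \<in> sets M" and eXm: "eX \<in> borel_measurable M"
    and ce: "AE \<omega> in M. eX \<omega> = real_cond_exp M (vimage_algebra (space M) X MX) (indicator V) \<omega>"
  shows "(\<integral>\<omega>. g (X \<omega>) * indicator V \<omega> \<partial>M) = (\<integral>\<omega>. g (X \<omega>) * eX \<omega> \<partial>M)"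
    and "integrable M (\<lambda>\<omega>. g (X \<omega>) * eX \<omega>)"
proof -
  interpret prob_space M by fact
  have subalg: "subalgebra M (vimage_algebra (space M) X MX)"
    unfolding subalgebra_def using sets_image_in_sets[OF refl Xm] by auto
  interpret fs: finite_measure_subalgebra M "vimage_algebra (space M) X MX"
    by unfold_locales (fact subalg)
  have gX: "(\<lambda>\<omega>. g (X \<omega>)) \<in> borel_measurable (vimage_algebra (space M) X MX)"
    using measurable_compose[OF measurable_vimage_algebra1 gm, of X "space M"] Xm
    by (auto simp: measurable_def comp_def)
  have gXM: "(\<lambda>\<omega>. g (X \<omega>)) \<in> borel_measurable M" using Xm gm by measurable
  have "(\<integral>\<omega>. g (X \<omega>) * indicator V \<omega> \<partial>M) =
        (\<integral>\<omega>. g (X \<omega>) * real_cond_exp M (vimage_algebra (space M) X MX) (indicator V) \<omega> \<partial>M)"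
  proof (rule fs.real_cond_exp_intg(2)[symmetric])
    have c0: "0 \<le> c" by (meson abs_ge_zero gb order_trans)
    show "integrable M (\<lambda>\<omega>. g (X \<omega>) * indicator V \<omega>)"
    proof (rule integrable_const_bound[where B=c])
      show "(\<lambda>\<omega>. g (X \<omega>) * indicator V \<omega>) \<in> borel_measurable M" using gXM Vm by measurable
      show "AE \<omega> in M. norm (g (X \<omega>) * indicator V \<omega>) \<le> c"
      proof (rule AE_I2)
        fix \<omega> show "norm (g (X \<omega>) * indicator V \<omega>) \<le> c"
          using gb[of "X \<omega>"] c0 by (cases "\<omega> \<in> V") auto
      qed
    qed
  qed (use gX Vm in auto)
  also have "\<dots> = (\<integral>\<omega>. g (X \<omega>) * eX \<omega> \<partial>M)"
    by (rule integral_cong_AE) (use ce gXM eXm in auto)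
  finally show "(\<integral>\<omega>. g (X \<omega>) * indicator V \<omega> \<partial>M) = (\<integral>\<omega>. g (X \<omega>) * eX \<omega> \<partial>M)" .
  have c0: "0 \<le> c" by (meson abs_ge_zero gb order_trans)
  have "integrable M (\<lambda>\<omega>. g (X \<omega>) * real_cond_exp M (vimage_algebra (space M) X MX) (indicator V) \<omega>)"
  proof (rule fs.real_cond_exp_intg(1))
    show "integrable M (\<lambda>\<omega>. g (X \<omega>) * indicator V \<omega>)"
    proof (rule integrable_const_bound[where B=c])
      show "(\<lambda>\<omega>. g (X \<omega>) * indicator V \<omega>) \<in> borel_measurable M" using gXM Vm by measurable
      show "AE \<omega> in M. norm (g (X \<omega>) * indicator V \<omega>) \<le> c"
      proof (rule AE_I2)
        fix \<omega> show "norm (g (X \<omega>) * indicator V \<omega>) \<le> c"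
          using gb[of "X \<omega>"] c0 by (cases "\<omega> \<in> V") auto
      qed
    qed
  qed (use gX Vm in auto)
  then show "integrable M (\<lambda>\<omega>. g (X \<omega>) * eX \<omega>)"
    by (rule integrable_cong_AE_imp) (use ce gXM eXm in auto)
qed

lemma tau_id:
  fixes a b :: real
  assumes "a + b > 0" "a \<ge> 0" "b \<ge> 0"
  shows "max 0 (min 1 (a / (a + b))) * (a + b) = a"
    and "max 0 (min 1 (1 - b / (a + b))) * (a + b) = a"
proof -
  have "a / (a + b) \<le> 1" using assms by (simp add: divide_le_eq_1)
  moreover have "0 \<le> a / (a + b)" using assms by simp
  moreover have "1 - b / (a + b) = a / (a + b)" using assms by (simp add: field_simps)
  ultimately show "max 0 (min 1 (a / (a + b))) * (a + b) = a"
    and "max 0 (min 1 (1 - b / (a + b))) * (a + b) = a" using assms by auto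
qed

lemma main_case:
  fixes M :: "'a measure" and Z S1 S0 :: "'a \<Rightarrow> bool" and X :: "'a \<Rightarrow> 'x"
    and e :: "bool \<times> bool \<Rightarrow> 'x \<Rightarrow> real" and zc :: "bool \<Rightarrow> bool"
  assumes P: "prob_space M"
    and Zm[measurable]: "Z \<in> measurable M (count_space UNIV)"
    and S1m[measurable]: "S1 \<in> measurable M (count_space UNIV)"
    and S0m[measurable]: "S0 \<in> measurable M (count_space UNIV)"
    and Xm[measurable]: "X \<in> measurable M MX"
    and ind: "prob_space.indep_set M
           (sets (vimage_algebra (space M) Z (count_space UNIV)))
           (sets (vimage_algebra (space M) (\<lambda>\<omega>. (S1 \<omega>, S0 \<omega>, X \<omega>))
              (count_space UNIV \<Otimes>\<^sub>M count_space UNIV \<Otimes>\<^sub>M MX)))"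
    and em[measurable]: "\<And>u. e u \<in> borel_measurable MX"
    and ec: "\<And>u. AE \<omega> in M. e u (X \<omega>) =
           real_cond_exp M (vimage_algebra (space M) X MX) (indicator {\<omega>\<in>space M. (S1 \<omega>, S0 \<omega>) = u}) \<omega>"
    and A_def: "A = {\<omega>\<in>space M. zc (Z \<omega>) \<and> (S1 \<omega>, S0 \<omega>) \<in> {u1, u2}}"
    and Apos: "measure M A > 0"
    and dpos: "AE \<omega> in M. e u1 (X \<omega>) + e u2 (X \<omega>) > 0"
    and u: "u \<in> {u1, u2}" and u12: "u1 \<noteq> u2"
  shows "cond_indep (uniform_measure M A)
           (vimage_algebra (space M) (\<lambda>\<omega>. e u (X \<omega>) / (e u1 (X \<omega>) + e u2 (X \<omega>))) borel)
           X MX (\<lambda>\<omega>. (S1 \<omega>, S0 \<omega>)) (count_space UNIV)"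
proof -
  interpret prob_space M by fact
  have Um[measurable]: "(\<lambda>\<omega>. (S1 \<omega>, S0 \<omega>)) \<in> measurable M (count_space UNIV)"
    by measurable
  have Am[measurable]: "A \<in> sets M" unfolding A_def by measurable

  have subX: "subalgebra M (vimage_algebra (space M) X MX)"
    unfolding subalgebra_def using sets_image_in_sets[OF refl Xm] by auto
  interpret fx: finite_measure_subalgebra M "vimage_algebra (space M) X MX"
    by unfold_locales (fact subX)
  have enn: "AE \<omega> in M. 0 \<le> e v (X \<omega>)" for v
  proof -
    have "AE \<omega> in M. 0 \<le> real_cond_exp M (vimage_algebra (space M) X MX) (indicator {\<omega>\<in>space M. (S1 \<omega>, S0 \<omega>) = v}) \<omega>"
      by (rule fx.real_cond_exp_pos) auto
    with ec[of v] show ?thesis by eventually_elim simp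
  qed
  define \<phi> where "\<phi> x = e u x / (e u1 x + e u2 x)" for x
  define \<psi> :: "real \<Rightarrow> real" where "\<psi> y = max 0 (min 1 (if u = u1 then y else 1 - y))" for y
  define \<tau> where "\<tau> x = \<psi> (\<phi> x)" for x
  have \<phi>m[measurable]: "\<phi> \<in> borel_measurable MX" unfolding \<phi>_def by measurable
  have \<psi>m[measurable]: "\<psi> \<in> borel_measurable borel" unfolding \<psi>_def by measurable
  have \<tau>m[measurable]: "\<tau> \<in> borel_measurable MX" unfolding \<tau>_def by measurable
  have \<tau>b: "0 \<le> \<tau> x \<and> \<tau> x \<le> 1" for x unfolding \<tau>_def \<psi>_def by auto
  have \<tau>id: "AE \<omega> in M. \<tau> (X \<omega>) * (e u1 (X \<omega>) + e u2 (X \<omega>)) = e u1 (X \<omega>)"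
    using dpos enn[of u1] enn[of u2]
  proof eventually_elim
    case (elim \<omega>)
    show ?case
    proof (cases "u = u1")
      case True
      then show ?thesis using tau_id(1)[OF elim] by (simp add: \<tau>_def \<psi>_def \<phi>_def)
    next
      case False
      then have "u = u2" using u by auto
      then show ?thesis using False tau_id(2)[OF elim] by (simp add: \<tau>_def \<psi>_def \<phi>_def)
    qed
  qed
  have emA: "emeasure M A \<noteq> 0" using Apos by (simp add: emeasure_eq_measure)
  have PP: "prob_space (uniform_measure M A)"
    by (rule prob_space_uniform_measure) (use emA in auto)
  have fm: "finite_measure M" by unfold_locales
  define W where "W \<omega> = (S1 \<omega>, S0 \<omega>, X \<omega>)" for \<omega>
  have Wm[measurable]: "W \<in> measurable M (count_space UNIV \<Otimes>\<^sub>M count_space UNIV \<Otimes>\<^sub>M MX)"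
    unfolding W_def by measurable
  have ind': "indep_set (sets (vimage_algebra (space M) Z (count_space UNIV)))
           (sets (vimage_algebra (space M) W (count_space UNIV \<Otimes>\<^sub>M count_space UNIV \<Otimes>\<^sub>M MX)))"
    using ind unfolding W_def by simp
  define zf :: "bool \<Rightarrow> real" where "zf b = of_bool (zc b)" for b
  show ?thesis
  proof (rule core[where \<phi>=\<phi> and t="\<lambda>\<omega>. \<tau> (X \<omega>)"])
    show "prob_space (uniform_measure M A)" by (fact PP)
    show "vimage_algebra (space M) (\<lambda>\<omega>. e u (X \<omega>) / (e u1 (X \<omega>) + e u2 (X \<omega>))) borel =
          vimage_algebra (space (uniform_measure M A)) (\<lambda>\<omega>. \<phi> (X \<omega>)) borel"
      by (simp add: \<phi>_def)
    show "X \<in> measurable (uniform_measure M A) MX" by measurable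
    show "\<phi> \<in> borel_measurable MX" by measurable
    show "(\<lambda>\<omega>. (S1 \<omega>, S0 \<omega>)) \<in> measurable (uniform_measure M A) (count_space UNIV)" by measurable
    show "AE \<omega> in uniform_measure M A. (S1 \<omega>, S0 \<omega>) = u1 \<or> (S1 \<omega>, S0 \<omega>) = u2"
      by (rule AE_uniform_measureI) (auto simp: A_def)
    show "(\<lambda>\<omega>. \<tau> (X \<omega>)) \<in> borel_measurable
            (vimage_algebra (space M) (\<lambda>\<omega>. e u (X \<omega>) / (e u1 (X \<omega>) + e u2 (X \<omega>))) borel)"
    proof -
      have "(\<lambda>\<omega>. \<phi> (X \<omega>)) \<in> measurable (vimage_algebra (space M) (\<lambda>\<omega>. \<phi> (X \<omega>)) borel) borel"
        by (rule measurable_vimage_algebra1) auto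
      from measurable_compose[OF this \<psi>m] show ?thesis by (simp add: \<tau>_def \<phi>_def)
    qed
    show "0 \<le> \<tau> (X \<omega>) \<and> \<tau> (X \<omega>) \<le> 1" for \<omega> by (rule \<tau>b)
    fix B assume B[measurable]: "B \<in> sets MX"
    show "(\<integral>\<omega>. indicator (X -` B \<inter> space (uniform_measure M A)) \<omega> *
             indicator {\<omega> \<in> space (uniform_measure M A). (S1 \<omega>, S0 \<omega>) = u1} \<omega> \<partial>uniform_measure M A) =
          (\<integral>\<omega>. indicator (X -` B \<inter> space (uniform_measure M A)) \<omega> * \<tau> (X \<omega>) \<partial>uniform_measure M A)"
    proof -
      let ?N = "count_space UNIV \<Otimes>\<^sub>M count_space UNIV \<Otimes>\<^sub>M MX"
      let ?IB = "indicator (X -` B \<inter> space M) :: 'a \<Rightarrow> real"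
      let ?V = "indicator {\<omega>\<in>space M. (S1 \<omega>, S0 \<omega>) = u1} :: 'a \<Rightarrow> real"
      define h1 :: "bool \<times> bool \<times> 'x \<Rightarrow> real" where
        "h1 w = indicator B (snd (snd w)) * of_bool ((fst w, fst (snd w)) = u1)" for w
      define h2 :: "bool \<times> bool \<times> 'x \<Rightarrow> real" where
        "h2 w = indicator B (snd (snd w)) * of_bool ((fst w, fst (snd w)) \<in> {u1, u2}) * \<tau> (snd (snd w))" for w
      define g where "g x = indicator B x * \<tau> x" for x
      have h1m[measurable]: "h1 \<in> borel_measurable ?N" unfolding h1_def by measurable
      have h2m[measurable]: "h2 \<in> borel_measurable ?N" unfolding h2_def by measurable
      have gm[measurable]: "g \<in> borel_measurable MX" unfolding g_def by measurable
      have gb: "\<bar>g x\<bar> \<le> 1" for x using \<tau>b[of x] by (auto simp: g_def indicator_def)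
      have zb: "\<bar>zf z\<bar> \<le> 1" for z by (auto simp: zf_def)
      have h1b: "\<bar>h1 w\<bar> \<le> 1" for w by (auto simp: h1_def indicator_def)
      have h2b: "\<bar>h2 w\<bar> \<le> 1" for w using \<tau>b[of "snd (snd w)"] by (auto simp: h2_def indicator_def)
      have V1: "{\<omega>\<in>space M. (S1 \<omega>, S0 \<omega>) = u1} \<in> sets M" by measurable
      have V2: "{\<omega>\<in>space M. (S1 \<omega>, S0 \<omega>) = u2} \<in> sets M" by measurable
      have eXm1: "(\<lambda>\<omega>. e u1 (X \<omega>)) \<in> borel_measurable M" by measurable
      have eXm2: "(\<lambda>\<omega>. e u2 (X \<omega>)) \<in> borel_measurable M" by measurable
      have L: "(\<integral>\<omega>. indicator A \<omega> * (?IB \<omega> * ?V \<omega>) \<partial>M) = (\<integral>\<omega>. zf (Z \<omega>) * h1 (W \<omega>) \<partial>M)"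
        by (rule Bochner_Integration.integral_cong) (auto simp: A_def W_def h1_def zf_def indicator_def)
      have R: "(\<integral>\<omega>. indicator A \<omega> * (?IB \<omega> * \<tau> (X \<omega>)) \<partial>M) = (\<integral>\<omega>. zf (Z \<omega>) * h2 (W \<omega>) \<partial>M)"
        by (rule Bochner_Integration.integral_cong) (auto simp: A_def W_def h2_def zf_def indicator_def)
      have L2: "(\<integral>\<omega>. zf (Z \<omega>) * h1 (W \<omega>) \<partial>M) = (\<integral>\<omega>. zf (Z \<omega>) \<partial>M) * (\<integral>\<omega>. h1 (W \<omega>) \<partial>M)"
        by (rule indep_int[OF P Zm Wm ind' h1m zb h1b])
      have R2: "(\<integral>\<omega>. zf (Z \<omega>) * h2 (W \<omega>) \<partial>M) = (\<integral>\<omega>. zf (Z \<omega>) \<partial>M) * (\<integral>\<omega>. h2 (W \<omega>) \<partial>M)"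
        by (rule indep_int[OF P Zm Wm ind' h2m zb h2b])
      have ib1: "\<bar>indicator B x\<bar> \<le> (1::real)" for x by (auto simp: indicator_def)
      have H1: "(\<integral>\<omega>. h1 (W \<omega>) \<partial>M) = (\<integral>\<omega>. indicator B (X \<omega>) * e u1 (X \<omega>) \<partial>M)"
      proof -
        have "(\<integral>\<omega>. h1 (W \<omega>) \<partial>M) = (\<integral>\<omega>. indicator B (X \<omega>) * ?V \<omega> \<partial>M)"
          by (rule Bochner_Integration.integral_cong) (auto simp: W_def h1_def indicator_def)
        also have "\<dots> = (\<integral>\<omega>. indicator B (X \<omega>) * e u1 (X \<omega>) \<partial>M)"
          by (rule ceX(1)[OF P Xm _ ib1 V1 eXm1 ec[of u1]]) measurable
        finally show ?thesis .
      qed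
      have H2: "(\<integral>\<omega>. h2 (W \<omega>) \<partial>M) = (\<integral>\<omega>. indicator B (X \<omega>) * e u1 (X \<omega>) \<partial>M)"
      proof -
        let ?V2 = "indicator {\<omega>\<in>space M. (S1 \<omega>, S0 \<omega>) = u2} :: 'a \<Rightarrow> real"
        have iV1: "integrable M (\<lambda>\<omega>. g (X \<omega>) * ?V \<omega>)"
          by (rule integrable_const_bound[where B=1]) (use gb in \<open>auto simp: indicator_def\<close>)
        have iV2: "integrable M (\<lambda>\<omega>. g (X \<omega>) * ?V2 \<omega>)"
          by (rule integrable_const_bound[where B=1]) (use gb in \<open>auto simp: indicator_def\<close>)
        have "(\<integral>\<omega>. h2 (W \<omega>) \<partial>M) = (\<integral>\<omega>. g (X \<omega>) * ?V \<omega> + g (X \<omega>) * ?V2 \<omega> \<partial>M)"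
          by (rule Bochner_Integration.integral_cong) (use u12 in \<open>auto simp: W_def h2_def g_def indicator_def\<close>)
        also have "\<dots> = (\<integral>\<omega>. g (X \<omega>) * ?V \<omega> \<partial>M) + (\<integral>\<omega>. g (X \<omega>) * ?V2 \<omega> \<partial>M)"
          by (rule Bochner_Integration.integral_add[OF iV1 iV2])
        also have "(\<integral>\<omega>. g (X \<omega>) * ?V \<omega> \<partial>M) = (\<integral>\<omega>. g (X \<omega>) * e u1 (X \<omega>) \<partial>M)"
          by (rule ceX(1)[OF P Xm gm gb V1 eXm1 ec[of u1]])
        also have "(\<integral>\<omega>. g (X \<omega>) * ?V2 \<omega> \<partial>M) = (\<integral>\<omega>. g (X \<omega>) * e u2 (X \<omega>) \<partial>M)"
          by (rule ceX(1)[OF P Xm gm gb V2 eXm2 ec[of u2]])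
        also have "(\<integral>\<omega>. g (X \<omega>) * e u1 (X \<omega>) \<partial>M) + (\<integral>\<omega>. g (X \<omega>) * e u2 (X \<omega>) \<partial>M)
             = (\<integral>\<omega>. g (X \<omega>) * e u1 (X \<omega>) + g (X \<omega>) * e u2 (X \<omega>) \<partial>M)"
          by (rule Bochner_Integration.integral_add[symmetric])
             (rule ceX(2)[OF P Xm gm gb V1 eXm1 ec[of u1]], rule ceX(2)[OF P Xm gm gb V2 eXm2 ec[of u2]])
        also have "\<dots> = (\<integral>\<omega>. indicator B (X \<omega>) * e u1 (X \<omega>) \<partial>M)"
        proof (rule integral_cong_AE)
          have aux: "t * (a + b) = a \<Longrightarrow> i * (t * a) + i * (t * b) = i * a" for t a b i :: real
            by (metis distrib_left)
          show "AE \<omega> in M. g (X \<omega>) * e u1 (X \<omega>) + g (X \<omega>) * e u2 (X \<omega>) = indicator B (X \<omega>) * e u1 (X \<omega>)"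
            using \<tau>id by eventually_elim (simp only: g_def mult.assoc aux)
        qed measurable
        finally show ?thesis .
      qed
      have "(\<integral>\<omega>. indicator A \<omega> * (?IB \<omega> * ?V \<omega>) \<partial>M) = (\<integral>\<omega>. indicator A \<omega> * (?IB \<omega> * \<tau> (X \<omega>)) \<partial>M)"
        unfolding L R L2 R2 H1 H2 ..
      moreover have "(\<integral>\<omega>. ?IB \<omega> * ?V \<omega> \<partial>uniform_measure M A) = (\<integral>\<omega>. indicator A \<omega> * (?IB \<omega> * ?V \<omega>) \<partial>M) / measure M A"
        by (rule unif_integral[OF fm Am Apos]) measurable
      moreover have "(\<integral>\<omega>. ?IB \<omega> * \<tau> (X \<omega>) \<partial>uniform_measure M A) = (\<integral>\<omega>. indicator A \<omega> * (?IB \<omega> * \<tau> (X \<omega>)) \<partial>M) / measure M A"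
        by (rule unif_integral[OF fm Am Apos]) measurable
      ultimately show ?thesis by simp
    qed
  qed
qed


theorem lemmaA6:
  fixes M :: "'a measure"
    and Z S1 S0 :: "'a \<Rightarrow> bool"
    and X :: "'a \<Rightarrow> real ^ 'n"
    and e :: "bool \<times> bool \<Rightarrow> real ^ 'n \<Rightarrow> real"
  defines "U \<equiv> (\<lambda>\<omega>. (S1 \<omega>, S0 \<omega>))"
    and "S \<equiv> (\<lambda>\<omega>. if Z \<omega> then S1 \<omega> else S0 \<omega>)"
  assumes "prob_space M"
    and "Z \<in> measurable M (count_space UNIV)"
    and "S1 \<in> measurable M (count_space UNIV)"
    and "S0 \<in> measurable M (count_space UNIV)"
    and "X \<in> borel_measurable M"
    and "prob_space.indep_set M
           (sets (vimage_algebra (space M) Z (count_space UNIV)))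
           (sets (vimage_algebra (space M) (\<lambda>\<omega>. (S1 \<omega>, S0 \<omega>, X \<omega>))
              (count_space UNIV \<Otimes>\<^sub>M count_space UNIV \<Otimes>\<^sub>M borel)))"
    and monotonicity: "AE \<omega> in M. S0 \<omega> \<longrightarrow> S1 \<omega>"
    and "\<And>u. e u \<in> borel_measurable borel"
    and "\<And>u. AE \<omega> in M. e u (X \<omega>) =
           real_cond_exp M (vimage_algebra (space M) X borel) (indicator {\<omega>\<in>space M. U \<omega> = u}) \<omega>"
    and "measure M {\<omega>\<in>space M. Z \<omega> \<and> S \<omega>} > 0"
    and "measure M {\<omega>\<in>space M. \<not> Z \<omega> \<and> \<not> S \<omega>} > 0"
    and "AE \<omega> in M. e ssbar (X \<omega>) + e ss (X \<omega>) > 0"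
    and "AE \<omega> in M. e ssbar (X \<omega>) + e sbarsbar (X \<omega>) > 0"
  shows "(\<forall>u\<in>{ssbar, ss}.
            cond_indep (uniform_measure M {\<omega>\<in>space M. Z \<omega> \<and> S \<omega>})
              (vimage_algebra (space M) (\<lambda>\<omega>. e1 e u (X \<omega>)) borel)
              X borel U (count_space UNIV))
       \<and> (\<forall>u\<in>{ssbar, sbarsbar}.
            cond_indep (uniform_measure M {\<omega>\<in>space M. \<not> Z \<omega> \<and> \<not> S \<omega>})
              (vimage_algebra (space M) (\<lambda>\<omega>. e0 e u (X \<omega>)) borel)
              X borel U (count_space UNIV))"
proof -
  note m = assms(4-7)
  have ec: "\<And>u. AE \<omega> in M. e u (X \<omega>) =
           real_cond_exp M (vimage_algebra (space M) X borel) (indicator {\<omega>\<in>space M. (S1 \<omega>, S0 \<omega>) = u}) \<omega>"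
    using assms(11) unfolding U_def .
  have A1: "{\<omega>\<in>space M. Z \<omega> \<and> S \<omega>} = {\<omega>\<in>space M. (\<lambda>b. b) (Z \<omega>) \<and> (S1 \<omega>, S0 \<omega>) \<in> {ssbar, ss}}"
    unfolding S_def by auto
  have A0: "{\<omega>\<in>space M. \<not> Z \<omega> \<and> \<not> S \<omega>} = {\<omega>\<in>space M. Not (Z \<omega>) \<and> (S1 \<omega>, S0 \<omega>) \<in> {ssbar, sbarsbar}}"
    unfolding S_def by auto
  have c1: "cond_indep (uniform_measure M {\<omega>\<in>space M. Z \<omega> \<and> S \<omega>})
              (vimage_algebra (space M) (\<lambda>\<omega>. e1 e u (X \<omega>)) borel)
              X borel U (count_space UNIV)" if "u \<in> {ssbar, ss}" for u
    unfolding e1_def U_def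
    by (rule main_case[OF assms(3) m(1) m(2) m(3) m(4) assms(8) assms(10) ec A1 _ assms(14) that])
       (use assms(12) in auto)
  have c0: "cond_indep (uniform_measure M {\<omega>\<in>space M. \<not> Z \<omega> \<and> \<not> S \<omega>})
              (vimage_algebra (space M) (\<lambda>\<omega>. e0 e u (X \<omega>)) borel)
              X borel U (count_space UNIV)" if "u \<in> {ssbar, sbarsbar}" for u
    unfolding e0_def U_def
    by (rule main_case[OF assms(3) m(1) m(2) m(3) m(4) assms(8) assms(10) ec A0 _ assms(15) that])
       (use assms(13) in auto)
  show ?thesis using c1 c0 by blast
qed

end
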